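(* Let $\mathcal{X}_V,\mathcal{X}_L$ be finite sets with $N_V=|\mathcal{X}_V|$, $N_L=|\mathcal{X}_L|$, let $\mathcal{P}_M$ be a joint distribution on $\mathcal{X}_V\times\mathcal{X}_L$ with everywhere positive marginals $\mathcal{P}_V,\mathcal{P}_L$, and let $\tilde P_M\in\mathbb{R}^{N_V\times N_L}$, $(\tilde P_M)_{x_v,x_l}=\mathcal{P}_M(x_v,x_l)/\sqrt{\mathcal{P}_V(x_v)\mathcal{P}_L(x_l)}$. Let $\tilde P_M=U\Sigma V^\top$ be a singular value decomposition with $r=\min(N_V,N_L)$, $U\in\mathbb{R}^{N_V\times r}$, $V\in\mathbb{R}^{N_L\times r}$ having orthonormal columns and $\Sigma=\mathrm{diag}(\sigma_1,\dots,\sigma_r)$ with $\sigma_1\ge\dots\ge\sigma_r\ge0$. Let $k\le r$ and let $U^k,V^k$ be the submatrices consisting of the first $k$ columns of $U,V$. Consider the loss, over all functions $f_V:\mathcal{X}_V\to\mathbb{R}^k$, $f_L:\mathcal{X}_L\to\mathbb{R}^k$, $$\mathcal{L}_{\rm SCL}(f_V,f_L)=-2\,\mathbb{E}_{(x_v,x_l)\sim\mathcal{P}_M}f_V(x_v)^\top f_L(x_l)+\mathbb{E}_{x_v^-\sim\mathcal{P}_V,\,x_l^-\sim\mathcal{P}_L}\big(f_V(x_v^-)^\top f_L(x_l^-)\big)^2$$ (with $x_v^-,x_l^-$ independent). Then $\mathcal{L}_{\rm SCL}$ attains its minimum at the encoders given, for all $x_v\in\mathcal{X}_V$, $x_l\in\mathcal{X}_L$,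 by $$f^*_V(x_v)=\frac{1}{\sqrt{\mathcal{P}_V(x_v)}}\big(U^k_{x_v}DR\big)^\top,\qquad f^*_L(x_l)=\frac{1}{\sqrt{\mathcal{P}_L(x_l)}}\big(V^k_{x_l}\,\mathrm{diag}(\sigma_1,\dots,\sigma_k)\,D^{-1}R\big)^\top,$$ where $U^k_{x}$ denotes the row of $U^k$ indexed by $x$ (similarly for $V^k$), $D\in\mathbb{R}^{k\times k}$ is an arbitrary invertible diagonal matrix, and $R\in\mathbb{R}^{k\times k}$ is an arbitrary orthogonal matrix.
   Context: The encoders are assumed expressive enough to realize any functions $f_V,f_L$, i.e., the minimization is over all functions. *)

theory Defs
  imports "HOL-Analysis.Analysis"
begin

text \<open>Encoders into R^k are represented as functions 'a => nat => real,
  only coordinates i < k being relevant.\<close>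

definition inner_k :: "nat \<Rightarrow> (nat \<Rightarrow> real) \<Rightarrow> (nat \<Rightarrow> real) \<Rightarrow> real" where
  "inner_k k a b = (\<Sum>i<k. a i * b i)"

definition margV :: "('v::finite \<Rightarrow> 'l::finite \<Rightarrow> real) \<Rightarrow> 'v \<Rightarrow> real" where
  "margV P xv = (\<Sum>xl\<in>UNIV. P xv xl)"

definition margL :: "('v::finite \<Rightarrow> 'l::finite \<Rightarrow> real) \<Rightarrow> 'l \<Rightarrow> real" where
  "margL P xl = (\<Sum>xv\<in>UNIV. P xv xl)"

definition is_joint_distribution :: "('v::finite \<Rightarrow> 'l::finite \<Rightarrow> real) \<Rightarrow> bool" where
  "is_joint_distribution P \<longleftrightarrow> (\<forall>xv xl. 0 \<le> P xv xl) \<and> (\<Sum>xv\<in>UNIV. \<Sum>xl\<in>UNIV. P xv xl) = 1"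

definition Ptilde :: "('v::finite \<Rightarrow> 'l::finite \<Rightarrow> real) \<Rightarrow> 'v \<Rightarrow> 'l \<Rightarrow> real" where
  "Ptilde P xv xl = P xv xl / sqrt (margV P xv * margL P xl)"

definition L_SCL :: "nat \<Rightarrow> ('v::finite \<Rightarrow> 'l::finite \<Rightarrow> real)
    \<Rightarrow> ('v \<Rightarrow> nat \<Rightarrow> real) \<Rightarrow> ('l \<Rightarrow> nat \<Rightarrow> real) \<Rightarrow> real" where
  "L_SCL k P fV fL =
     - 2 * (\<Sum>xv\<in>UNIV. \<Sum>xl\<in>UNIV. P xv xl * inner_k k (fV xv) (fL xl))
     + (\<Sum>xv\<in>UNIV. \<Sum>xl\<in>UNIV. margV P xv * margL P xl * (inner_k k (fV xv) (fL xl))\<^sup>2)"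

definition orthonormal_cols :: "nat \<Rightarrow> ('a::finite \<Rightarrow> nat \<Rightarrow> real) \<Rightarrow> bool" where
  "orthonormal_cols r U \<longleftrightarrow>
     (\<forall>i<r. \<forall>j<r. (\<Sum>x\<in>UNIV. U x i * U x j) = (if i = j then 1 else 0))"

definition orthogonal_k :: "nat \<Rightarrow> (nat \<Rightarrow> nat \<Rightarrow> real) \<Rightarrow> bool" where
  "orthogonal_k k R \<longleftrightarrow>
     (\<forall>i<k. \<forall>j<k. (\<Sum>m<k. R m i * R m j) = (if i = j then 1 else 0))"

end

theory Submission
  imports Defs
begin


lemma on_sq:
  fixes W :: "'a::finite \<Rightarrow> nat \<Rightarrow> real"
  assumes fin: "finite I" and on: "\<forall>i\<in>I. \<forall>j\<in>I. (\<Sum>x\<in>UNIV. W x i * W x j) = (if i = j then 1 else 0)"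
  shows "(\<Sum>x\<in>UNIV. (\<Sum>i\<in>I. c i * W x i)\<^sup>2) = (\<Sum>i\<in>I. (c i)\<^sup>2)"
proof -
  have "(\<Sum>x\<in>UNIV. (\<Sum>i\<in>I. c i * W x i)\<^sup>2) = (\<Sum>x\<in>UNIV. \<Sum>i\<in>I. \<Sum>j\<in>I. c i * c j * (W x i * W x j))"
    by (simp add: power2_eq_square sum_product algebra_simps)
  also have "\<dots> = (\<Sum>i\<in>I. \<Sum>j\<in>I. c i * c j * (\<Sum>x\<in>UNIV. W x i * W x j))"
    by (simp add: sum.swap[of _ UNIV] sum_distrib_left)
  also have "\<dots> = (\<Sum>i\<in>I. \<Sum>j\<in>I. c i * c j * (if i = j then 1 else 0))"
    using on by (intro sum.cong refl) auto
  also have "\<dots> = (\<Sum>i\<in>I. (c i)\<^sup>2)"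
    using fin by (simp add: power2_eq_square if_distrib sum.delta cong: if_cong)
  finally show ?thesis .
qed

lemma orth_expand:
  fixes e :: "'i \<Rightarrow> 'a::real_inner"
  assumes fin: "finite I" and on: "\<forall>i\<in>I. \<forall>j\<in>I. inner (e i) (e j) = (if i = j then 1 else 0)"
  shows "inner (a - (\<Sum>i\<in>I. c i *\<^sub>R e i)) (a - (\<Sum>i\<in>I. c i *\<^sub>R e i))
     = inner a a - 2 * (\<Sum>i\<in>I. c i * inner a (e i)) + (\<Sum>i\<in>I. (c i)\<^sup>2)"
proof -
  have pp: "inner (\<Sum>i\<in>I. c i *\<^sub>R e i) (\<Sum>i\<in>I. c i *\<^sub>R e i) = (\<Sum>i\<in>I. (c i)\<^sup>2)"
  proof -
    have "inner (\<Sum>i\<in>I. c i *\<^sub>R e i) (\<Sum>i\<in>I. c i *\<^sub>R e i) = (\<Sum>i\<in>I. \<Sum>j\<in>I. c i * c j * inner (e i) (e j))"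
      by (simp add: inner_sum_left inner_sum_right sum_distrib_left mult.assoc inner_commute)
         (simp add: mult.left_commute)
    also have "\<dots> = (\<Sum>i\<in>I. \<Sum>j\<in>I. c i * c j * (if i = j then 1 else 0))"
      using on by (intro sum.cong refl) auto
    also have "\<dots> = (\<Sum>i\<in>I. (c i)\<^sup>2)"
      using fin by (simp add: power2_eq_square if_distrib sum.delta cong: if_cong)
    finally show ?thesis .
  qed
  have ap: "inner a (\<Sum>i\<in>I. c i *\<^sub>R e i) = (\<Sum>i\<in>I. c i * inner a (e i))"
    by (simp add: inner_sum_right)
  show ?thesis using pp ap by (simp add: inner_diff_left inner_diff_right inner_commute)
qed

lemma bessel:
  fixes e :: "'i \<Rightarrow> 'a::real_inner"
  assumes fin: "finite I" and on: "\<forall>i\<in>I. \<forall>j\<in>I. inner (e i) (e j) = (if i = j then 1 else 0)"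
  shows "(\<Sum>i\<in>I. (inner a (e i))\<^sup>2) \<le> inner a a"
proof -
  have "0 \<le> inner (a - (\<Sum>i\<in>I. inner a (e i) *\<^sub>R e i)) (a - (\<Sum>i\<in>I. inner a (e i) *\<^sub>R e i))"
    by simp
  also have "\<dots> = inner a a - 2 * (\<Sum>i\<in>I. inner a (e i) * inner a (e i)) + (\<Sum>i\<in>I. (inner a (e i))\<^sup>2)"
    by (rule orth_expand[OF fin on])
  finally show ?thesis by (simp add: power2_eq_square)
qed

lemma proj_ineq:
  fixes e :: "'i \<Rightarrow> 'a::real_inner"
  assumes fin: "finite I" and on: "\<forall>i\<in>I. \<forall>j\<in>I. inner (e i) (e j) = (if i = j then 1 else 0)"
  shows "inner a a - (\<Sum>i\<in>I. (inner a (e i))\<^sup>2) \<le> inner (a - (\<Sum>i\<in>I. c i *\<^sub>R e i)) (a - (\<Sum>i\<in>I. c i *\<^sub>R e i))"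
proof -
  have "(\<Sum>i\<in>I. - (inner a (e i))\<^sup>2) \<le> (\<Sum>i\<in>I. (c i)\<^sup>2 - 2 * (c i * inner a (e i)))"
  proof (rule sum_mono)
    fix i show "- (inner a (e i))\<^sup>2 \<le> (c i)\<^sup>2 - 2 * (c i * inner a (e i))"
      using sum_squares_ge_zero[of "c i - inner a (e i)" 0]
      by (simp add: power2_eq_square algebra_simps)
  qed
  then show ?thesis unfolding orth_expand[OF fin on]
    by (simp add: sum_subtractf sum_negf sum_distrib_left)
qed

lemma rearr:
  fixes s w :: "nat \<Rightarrow> real"
  assumes mono: "\<forall>i j. i \<le> j \<longrightarrow> j < r \<longrightarrow> s j \<le> s i"
    and snn: "\<forall>i<r. 0 \<le> s i"
    and w01: "\<forall>i<r. 0 \<le> w i \<and> w i \<le> 1" and ws: "(\<Sum>i<r. w i) \<le> real k" and kr: "k \<le> r"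
  shows "(\<Sum>i<r. s i * w i) \<le> (\<Sum>i<k. s i)"
proof -
  define c where "c = (if k < r then s k else 0)"
  have c_lo: "c * (1 - w i) \<le> s i * (1 - w i)" if "i < k" for i
  proof -
    have "c \<le> s i" using that mono kr unfolding c_def
      using snn by (auto simp: not_less)
    then show ?thesis using w01 that kr by (intro mult_right_mono) auto
  qed
  have c_hi: "s i * w i \<le> c * w i" if "i \<in> {k..<r}" for i
  proof -
    have "s i \<le> c" using that mono kr unfolding c_def by auto
    then show ?thesis using w01 that by (intro mult_right_mono) auto
  qed
  have c_nn: "0 \<le> c" using snn unfolding c_def by auto
  have split: "{..<r} = {..<k} \<union> {k..<r}" using kr by auto
  have "(\<Sum>i<r. s i * w i) = (\<Sum>i<k. s i * w i) + (\<Sum>i\<in>{k..<r}. s i * w i)"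
    unfolding split by (rule sum.union_disjoint) auto
  also have "\<dots> \<le> (\<Sum>i<k. s i * w i) + (\<Sum>i\<in>{k..<r}. c * w i)"
    using c_hi by (intro add_left_mono sum_mono) auto
  also have "\<dots> \<le> (\<Sum>i<k. s i)" 
  proof -
    have "(\<Sum>i<k. c * (1 - w i)) \<le> (\<Sum>i<k. s i * (1 - w i))"
      using c_lo by (intro sum_mono) auto
    moreover have "(\<Sum>i<r. c * w i) = (\<Sum>i<k. c * w i) + (\<Sum>i\<in>{k..<r}. c * w i)"
      unfolding split by (rule sum.union_disjoint) auto
    moreover have "(\<Sum>i<r. c * w i) \<le> c * k"
      using ws c_nn by (simp add: sum_distrib_left[symmetric] mult_left_mono)
    ultimately show ?thesis
      by (simp add: algebra_simps sum_subtractf sum_distrib_left[symmetric] sum.distrib)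
  qed
  finally show ?thesis .
qed



lemma orth_rows:
  assumes R: "orthogonal_k k R"
  shows "\<forall>i<k. \<forall>j<k. (\<Sum>m<k. R i m * R j m) = (if i = j then 1 else 0)"
proof -
  define M where "M i j = (\<Sum>m<k. R i m * R j m)" for i j
  have Rc: "\<And>i j. i < k \<Longrightarrow> j < k \<Longrightarrow> (\<Sum>m<k. R m i * R m j) = (if i = j then 1 else 0)"
    using R unfolding orthogonal_k_def by auto
  have s1: "(\<Sum>i<k. \<Sum>j<k. (M i j)\<^sup>2) = real k"
  proof -
    define F where "F i j m n = (R i m * R i n) * (R j m * R j n)" for i j m n
    have "(\<Sum>i<k. \<Sum>j<k. (M i j)\<^sup>2) = (\<Sum>i<k. \<Sum>j<k. \<Sum>m<k. \<Sum>n<k. F i j m n)"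
      unfolding M_def F_def by (simp add: power2_eq_square sum_product mult_ac)
    also have "\<dots> = (\<Sum>i<k. \<Sum>m<k. \<Sum>j<k. \<Sum>n<k. F i j m n)"
      by (rule sum.cong[OF refl], rule sum.swap)
    also have "\<dots> = (\<Sum>m<k. \<Sum>i<k. \<Sum>j<k. \<Sum>n<k. F i j m n)"
      by (rule sum.swap)
    also have "\<dots> = (\<Sum>m<k. \<Sum>i<k. \<Sum>n<k. \<Sum>j<k. F i j m n)"
      by (rule sum.cong[OF refl], rule sum.cong[OF refl], rule sum.swap)
    also have "\<dots> = (\<Sum>m<k. \<Sum>n<k. \<Sum>i<k. \<Sum>j<k. F i j m n)"
      by (rule sum.cong[OF refl], rule sum.swap)
    also have "\<dots> = (\<Sum>m<k. \<Sum>n<k. (\<Sum>i<k. R i m * R i n) * (\<Sum>j<k. R j m * R j n))"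
      unfolding F_def by (simp add: sum_product)
    also have "\<dots> = (\<Sum>m<k. \<Sum>n<k. (if m = n then 1 else 0))"
      by (intro sum.cong refl) (simp add: Rc)
    also have "\<dots> = real k" by simp
    finally show ?thesis .
  qed
  have s2: "(\<Sum>i<k. M i i) = real k"
  proof -
    have "(\<Sum>i<k. M i i) = (\<Sum>m<k. \<Sum>i<k. R i m * R i m)"
      unfolding M_def by (rule sum.swap)
    also have "\<dots> = (\<Sum>m<k. 1)" by (intro sum.cong refl) (simp add: Rc)
    finally show ?thesis by simp
  qed
  have "(\<Sum>i<k. \<Sum>j<k. ((if i = j then 1 else 0) - M i j)\<^sup>2)
      = (\<Sum>i<k. \<Sum>j<k. (if i = j then 1 - 2 * M i j else 0) + (M i j)\<^sup>2)"
    by (intro sum.cong refl) (simp add: power2_eq_square algebra_simps)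
  also have "\<dots> = (\<Sum>i<k. \<Sum>j<k. (if i = j then 1 - 2 * M i j else 0)) + (\<Sum>i<k. \<Sum>j<k. (M i j)\<^sup>2)"
    by (simp add: sum.distrib)
  also have "(\<Sum>i<k. \<Sum>j<k. (if i = j then 1 - 2 * M i j else 0)) = (\<Sum>i<k. 1 - 2 * M i i)"
    by (intro sum.cong refl) (simp add: sum.delta)
  also have "\<dots> = real k - 2 * real k" using s2 by (simp add: sum_subtractf sum_distrib_left[symmetric])
  also have "real k - 2 * real k + (\<Sum>i<k. \<Sum>j<k. (M i j)\<^sup>2) = 0" using s1 by simp
  finally have z: "(\<Sum>i<k. \<Sum>j<k. ((if i = j then 1 else 0) - M i j)\<^sup>2) = 0" .
  show ?thesis
  proof (intro allI impI)
    fix i j assume ij: "i < k" "j < k"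
    have "(\<Sum>j<k. ((if i = j then 1 else 0) - M i j)\<^sup>2) = 0"
      using z ij by (subst (asm) sum_nonneg_eq_0_iff) (auto intro: sum_nonneg)
    then have "((if i = j then 1 else 0) - M i j)\<^sup>2 = 0"
      using ij by (subst (asm) sum_nonneg_eq_0_iff) auto
    then show "(\<Sum>m<k. R i m * R j m) = (if i = j then 1 else 0)" unfolding M_def by simp
  qed
qed



lemma gram_opt:
  assumes R: "orthogonal_k k R" and d: "\<forall>i<k. d i \<noteq> 0"
  shows "(\<Sum>j<k. (\<Sum>i<k. a i * d i * R i j) * (\<Sum>i<k. b i * s i * (1 / d i) * R i j))
       = (\<Sum>i<k. a i * s i * b i)"
proof -
  have RR: "\<forall>i<k. \<forall>j<k. (\<Sum>m<k. R i m * R j m) = (if i = j then 1 else 0)"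
    by (rule orth_rows[OF R])
  define G where "G i i' j = (a i * d i) * (b i' * s i' * (1 / d i')) * (R i j * R i' j)" for i i' j
  have "(\<Sum>j<k. (\<Sum>i<k. a i * d i * R i j) * (\<Sum>i<k. b i * s i * (1 / d i) * R i j))
      = (\<Sum>j<k. \<Sum>i<k. \<Sum>i'<k. G i i' j)"
    unfolding G_def by (simp add: sum_product mult_ac)
  also have "\<dots> = (\<Sum>i<k. \<Sum>j<k. \<Sum>i'<k. G i i' j)" by (rule sum.swap)
  also have "\<dots> = (\<Sum>i<k. \<Sum>i'<k. \<Sum>j<k. G i i' j)"
    by (rule sum.cong[OF refl], rule sum.swap)
  also have "\<dots> = (\<Sum>i<k. \<Sum>i'<k. (a i * d i) * (b i' * s i' * (1 / d i')) * (\<Sum>j<k. R i j * R i' j))"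
    unfolding G_def by (simp add: sum_distrib_left)
  also have "\<dots> = (\<Sum>i<k. \<Sum>i'<k. if i = i' then (a i * d i) * (b i' * s i' * (1 / d i')) else 0)"
    using RR by (intro sum.cong refl) simp
  also have "\<dots> = (\<Sum>i<k. (a i * d i) * (b i * s i * (1 / d i)))"
    by (intro sum.cong refl) (simp add: sum.delta)
  also have "\<dots> = (\<Sum>i<k. a i * s i * b i)"
    using d by (intro sum.cong refl) (simp add: field_simps)
  finally show ?thesis .
qed

lemma double_sq:
  fixes U :: "'v::finite \<Rightarrow> nat \<Rightarrow> real" and V :: "'l::finite \<Rightarrow> nat \<Rightarrow> real"
  assumes U_on: "orthonormal_cols r U" and V_on: "orthonormal_cols r V" and I: "I \<subseteq> {..<r}"
  shows "(\<Sum>y\<in>UNIV. \<Sum>x\<in>UNIV. (\<Sum>i\<in>I. (\<sigma> i * V y i) * U x i)\<^sup>2) = (\<Sum>i\<in>I. (\<sigma> i)\<^sup>2)"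
proof -
  have fin: "finite I" using I finite_subset by blast
  have Uo: "\<forall>i\<in>I. \<forall>j\<in>I. (\<Sum>x\<in>UNIV. U x i * U x j) = (if i = j then 1 else 0)"
    using U_on I unfolding orthonormal_cols_def by blast
  have "(\<Sum>y\<in>UNIV. \<Sum>x\<in>UNIV. (\<Sum>i\<in>I. (\<sigma> i * V y i) * U x i)\<^sup>2) = (\<Sum>y\<in>UNIV. \<Sum>i\<in>I. (\<sigma> i * V y i)\<^sup>2)"
    by (intro sum.cong refl on_sq[OF fin Uo])
  also have "\<dots> = (\<Sum>i\<in>I. (\<sigma> i)\<^sup>2 * (\<Sum>y\<in>UNIV. V y i * V y i))"
    by (simp add: sum.swap[of _ UNIV] sum_distrib_left power_mult_distrib power2_eq_square mult_ac)
  also have "\<dots> = (\<Sum>i\<in>I. (\<sigma> i)\<^sup>2)"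
    using V_on I unfolding orthonormal_cols_def by (intro sum.cong refl) auto
  finally show ?thesis .
qed

lemma L_rewrite:
  fixes P :: "'v::finite \<Rightarrow> 'l::finite \<Rightarrow> real"
  assumes posV: "\<forall>xv. 0 < margV P xv" and posL: "\<forall>xl. 0 < margL P xl"
  shows "L_SCL k P fV fL =
    (\<Sum>y\<in>UNIV. inner ((\<chi> x. Ptilde P x y) - (\<chi> x. sqrt (margV P x) * sqrt (margL P y) * inner_k k (fV x) (fL y)))
                       ((\<chi> x. Ptilde P x y) - (\<chi> x. sqrt (margV P x) * sqrt (margL P y) * inner_k k (fV x) (fL y))))
    - (\<Sum>y\<in>UNIV. inner ((\<chi> x. Ptilde P x y) :: real^'v) (\<chi> x. Ptilde P x y))"
proof -
  have pt: "\<And>x y. -2 * (P x y * inner_k k (fV x) (fL y)) + margV P x * margL P y * (inner_k k (fV x) (fL y))\<^sup>2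
     = (Ptilde P x y - sqrt (margV P x) * sqrt (margL P y) * inner_k k (fV x) (fL y))\<^sup>2 - (Ptilde P x y)\<^sup>2"
  proof -
    fix x y
    have a: "0 < sqrt (margV P x)" "0 < sqrt (margL P y)" using posV posL by auto
    have P: "P x y = sqrt (margV P x) * sqrt (margL P y) * Ptilde P x y"
      unfolding Ptilde_def real_sqrt_mult using a by simp
    have s: "margV P x * margL P y = (sqrt (margV P x) * sqrt (margL P y))\<^sup>2"
      using posV posL by (simp add: power_mult_distrib less_imp_le)
    show "?thesis x y" unfolding P s by (simp add: power2_eq_square algebra_simps)
  qed
  have "L_SCL k P fV fL = (\<Sum>x\<in>UNIV. \<Sum>y\<in>UNIV. -2 * (P x y * inner_k k (fV x) (fL y)) + margV P x * margL P y * (inner_k k (fV x) (fL y))\<^sup>2)"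
    unfolding L_SCL_def by (simp only: sum.distrib sum_distrib_left)
  also have "\<dots> = (\<Sum>x\<in>UNIV. \<Sum>y\<in>UNIV. (Ptilde P x y - sqrt (margV P x) * sqrt (margL P y) * inner_k k (fV x) (fL y))\<^sup>2 - (Ptilde P x y)\<^sup>2)"
    by (simp only: pt)
  also have "\<dots> = (\<Sum>y\<in>UNIV. \<Sum>x\<in>UNIV. (Ptilde P x y - sqrt (margV P x) * sqrt (margL P y) * inner_k k (fV x) (fL y))\<^sup>2 - (Ptilde P x y)\<^sup>2)"
    by (rule sum.swap)
  also have "\<dots> = (\<Sum>y\<in>UNIV. \<Sum>x\<in>UNIV. (Ptilde P x y - sqrt (margV P x) * sqrt (margL P y) * inner_k k (fV x) (fL y))\<^sup>2) - (\<Sum>y\<in>UNIV. \<Sum>x\<in>UNIV. (Ptilde P x y)\<^sup>2)"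
    by (simp add: sum_subtractf)
  finally show ?thesis by (simp add: inner_vec_def power2_eq_square)
qed



lemma lower_bound:
  fixes P :: "'v::finite \<Rightarrow> 'l::finite \<Rightarrow> real"
    and U :: "'v \<Rightarrow> nat \<Rightarrow> real" and V :: "'l \<Rightarrow> nat \<Rightarrow> real"
    and \<sigma> :: "nat \<Rightarrow> real" and r k :: nat
  assumes posV: "\<forall>xv. 0 < margV P xv"
    and posL: "\<forall>xl. 0 < margL P xl"
    and svd: "\<forall>xv xl. Ptilde P xv xl = (\<Sum>i<r. U xv i * \<sigma> i * V xl i)"
    and U_on: "orthonormal_cols r U"
    and V_on: "orthonormal_cols r V"
    and \<sigma>_mono: "\<forall>i j. i \<le> j \<longrightarrow> j < r \<longrightarrow> \<sigma> j \<le> \<sigma> i"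
    and \<sigma>_nonneg: "\<forall>i<r. 0 \<le> \<sigma> i"
    and k_le: "k \<le> r"
  shows "- (\<Sum>i<k. (\<sigma> i)\<^sup>2) \<le> L_SCL k P fV fL"
proof -
  define col :: "'l \<Rightarrow> real^'v" where "col y = (\<chi> x. Ptilde P x y)" for y
  define bc :: "'l \<Rightarrow> real^'v" where "bc y = (\<chi> x. sqrt (margV P x) * sqrt (margL P y) * inner_k k (fV x) (fL y))" for y
  define Fc :: "nat \<Rightarrow> real^'v" where "Fc j = (\<chi> x. sqrt (margV P x) * fV x j)" for j
  define u :: "nat \<Rightarrow> real^'v" where "u i = (\<chi> x. U x i)" for i
  have L: "L_SCL k P fV fL = (\<Sum>y\<in>UNIV. inner (col y - bc y) (col y - bc y)) - (\<Sum>y\<in>UNIV. inner (col y) (col y))"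
    unfolding col_def bc_def by (rule L_rewrite[OF posV posL])
  have bc_eq: "bc y = (\<Sum>j<k. (sqrt (margL P y) * fL y j) *\<^sub>R Fc j)" for y
    unfolding bc_def Fc_def inner_k_def
    by (simp add: vec_eq_iff sum_component sum_distrib_left mult_ac)
  define S where "S = span (Fc ` {..<k})"
  have "subspace S" unfolding S_def by simp
  then obtain Q where QS: "Q \<subseteq> S" and Qorth: "pairwise orthogonal Q"
    and Qn: "\<And>x. x \<in> Q \<Longrightarrow> norm x = 1" and Qind: "independent Q" and Qcard: "card Q = dim S"
    and Qspan: "span Q = S"
    by (rule orthonormal_basis_subspace) blast
  have Qfin: "finite Q" using Qind by (rule independent_imp_finite)
  have cardQ: "card Q \<le> k"
  proof -
    have "dim S \<le> card (Fc ` {..<k})" unfolding S_def dim_span by (rule dim_le_card') simp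
    also have "\<dots> \<le> k" using card_image_le[of "{..<k}" Fc] by simp
    finally show ?thesis using Qcard by simp
  qed
  have Qon: "\<forall>q\<in>Q. \<forall>q'\<in>Q. inner (id q) (id q') = (if q = q' then 1 else 0)"
  proof (intro ballI)
    fix q q' assume "q \<in> Q" "q' \<in> Q"
    then show "inner (id q) (id q') = (if q = q' then 1 else 0)"
      using Qorth Qn[of q] unfolding pairwise_def orthogonal_def
      by (auto simp: power2_norm_eq_inner[symmetric])
  qed
  have uon: "\<forall>i\<in>{..<r}. \<forall>j\<in>{..<r}. inner (u i) (u j) = (if i = j then 1 else 0)"
    using U_on unfolding orthonormal_cols_def u_def by (simp add: inner_vec_def)
  have proj: "inner (col y) (col y) - (\<Sum>q\<in>Q. (inner (col y) (id q))\<^sup>2) \<le> inner (col y - bc y) (col y - bc y)" for y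
  proof -
    have "bc y \<in> span Q" unfolding Qspan S_def bc_eq
      by (intro span_sum span_scale span_base) auto
    then obtain c where c: "bc y = (\<Sum>q\<in>Q. c q *\<^sub>R q)"
      using span_finite[OF Qfin] by auto
    show ?thesis unfolding c using proj_ineq[OF Qfin Qon, of "col y" c] by simp
  qed
  define w where "w i = (\<Sum>q\<in>Q. (inner (u i) q)\<^sup>2)" for i
  have colq: "(\<Sum>y\<in>UNIV. (inner (col y) q)\<^sup>2) = (\<Sum>i<r. (\<sigma> i)\<^sup>2 * (inner (u i) q)\<^sup>2)" for q
  proof -
    have "inner (col y) q = (\<Sum>i<r. (\<sigma> i * inner (u i) q) * V y i)" for y
      unfolding col_def u_def inner_vec_def using svd
      by (simp add: sum_distrib_left sum_distrib_right sum.swap[of _ UNIV] mult_ac)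
    then have "(\<Sum>y\<in>UNIV. (inner (col y) q)\<^sup>2) = (\<Sum>y\<in>UNIV. (\<Sum>i<r. (\<sigma> i * inner (u i) q) * V y i)\<^sup>2)"
      by simp
    also have "\<dots> = (\<Sum>i<r. (\<sigma> i * inner (u i) q)\<^sup>2)"
      by (rule on_sq) (use V_on in \<open>auto simp: orthonormal_cols_def\<close>)
    finally show ?thesis by (simp add: power_mult_distrib)
  qed
  have "(\<Sum>y\<in>UNIV. \<Sum>q\<in>Q. (inner (col y) (id q))\<^sup>2) = (\<Sum>q\<in>Q. \<Sum>y\<in>UNIV. (inner (col y) q)\<^sup>2)"
    by (simp add: sum.swap[of _ UNIV])
  also have "\<dots> = (\<Sum>i<r. (\<sigma> i)\<^sup>2 * w i)"
    unfolding colq w_def by (simp add: sum.swap[of _ Q] sum_distrib_left)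
  also have "\<dots> \<le> (\<Sum>i<k. (\<sigma> i)\<^sup>2)"
  proof (rule rearr[OF _ _ _ _ k_le])
    show "\<forall>i j. i \<le> j \<longrightarrow> j < r \<longrightarrow> (\<sigma> j)\<^sup>2 \<le> (\<sigma> i)\<^sup>2"
      using \<sigma>_mono \<sigma>_nonneg by (auto intro: power_mono)
    show "\<forall>i<r. 0 \<le> (\<sigma> i)\<^sup>2" by simp
    show "\<forall>i<r. 0 \<le> w i \<and> w i \<le> 1"
    proof (intro allI impI conjI)
      fix i assume i: "i < r"
      show "0 \<le> w i" unfolding w_def by (simp add: sum_nonneg)
      have "w i \<le> inner (u i) (u i)" unfolding w_def using bessel[OF Qfin Qon, of "u i"] by simp
      also have "\<dots> = 1" using uon i by simp
      finally show "w i \<le> 1" .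
    qed
    have "(\<Sum>i<r. w i) = (\<Sum>q\<in>Q. \<Sum>i<r. (inner q (u i))\<^sup>2)"
      unfolding w_def by (simp add: sum.swap[of _ Q] inner_commute)
    also have "\<dots> \<le> (\<Sum>q\<in>Q. inner q q)"
      by (intro sum_mono bessel) (use uon in auto)
    also have "\<dots> = card Q" using Qon by simp
    finally show "(\<Sum>i<r. w i) \<le> real k" using cardQ by simp
  qed
  finally have key: "(\<Sum>y\<in>UNIV. \<Sum>q\<in>Q. (inner (col y) (id q))\<^sup>2) \<le> (\<Sum>i<k. (\<sigma> i)\<^sup>2)" .
  have "(\<Sum>y\<in>UNIV. inner (col y) (col y)) - (\<Sum>y\<in>UNIV. \<Sum>q\<in>Q. (inner (col y) (id q))\<^sup>2)
      \<le> (\<Sum>y\<in>UNIV. inner (col y - bc y) (col y - bc y))"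
    using sum_mono[of UNIV "\<lambda>y. inner (col y) (col y) - (\<Sum>q\<in>Q. (inner (col y) (id q))\<^sup>2)", OF proj]
    by (simp add: sum_subtractf)
  then show ?thesis unfolding L using key by linarith
qed



theorem theorem3p2:
  fixes P :: "'v::finite \<Rightarrow> 'l::finite \<Rightarrow> real"
    and U :: "'v \<Rightarrow> nat \<Rightarrow> real" and V :: "'l \<Rightarrow> nat \<Rightarrow> real"
    and \<sigma> :: "nat \<Rightarrow> real" and r k :: nat
    and d :: "nat \<Rightarrow> real" and R :: "nat \<Rightarrow> nat \<Rightarrow> real"
  assumes dist: "is_joint_distribution P"
    and posV: "\<forall>xv. 0 < margV P xv"
    and posL: "\<forall>xl. 0 < margL P xl"
    and r_def: "r = min CARD('v) CARD('l)"
    and svd: "\<forall>xv xl. Ptilde P xv xl = (\<Sum>i<r. U xv i * \<sigma> i * V xl i)"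
    and U_on: "orthonormal_cols r U"
    and V_on: "orthonormal_cols r V"
    and \<sigma>_mono: "\<forall>i j. i \<le> j \<longrightarrow> j < r \<longrightarrow> \<sigma> j \<le> \<sigma> i"
    and \<sigma>_nonneg: "\<forall>i<r. 0 \<le> \<sigma> i"
    and k_le: "k \<le> r"
    and d_inv: "\<forall>i<k. d i \<noteq> 0"
    and R_orth: "orthogonal_k k R"
  shows "\<forall>fV fL. L_SCL k P
           (\<lambda>xv j. (1 / sqrt (margV P xv)) * (\<Sum>i<k. U xv i * d i * R i j))
           (\<lambda>xl j. (1 / sqrt (margL P xl)) * (\<Sum>i<k. V xl i * \<sigma> i * (1 / d i) * R i j))
         \<le> L_SCL k P fV fL"
proof (intro allI)
  fix fV fL
  define gV where "gV = (\<lambda>xv j. (1 / sqrt (margV P xv)) * (\<Sum>i<k. U xv i * d i * R i j))"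
  define gL where "gL = (\<lambda>xl j. (1 / sqrt (margL P xl)) * (\<Sum>i<k. V xl i * \<sigma> i * (1 / d i) * R i j))"
  have bstar: "sqrt (margV P x) * sqrt (margL P y) * inner_k k (gV x) (gL y) = (\<Sum>i<k. (\<sigma> i * V y i) * U x i)" for x y
  proof -
    have a: "0 < sqrt (margV P x)" "0 < sqrt (margL P y)" using posV posL by auto
    have "inner_k k (gV x) (gL y) = (1 / sqrt (margV P x)) * (1 / sqrt (margL P y)) *
       (\<Sum>j<k. (\<Sum>i<k. U x i * d i * R i j) * (\<Sum>i<k. V y i * \<sigma> i * (1 / d i) * R i j))"
      unfolding inner_k_def gV_def gL_def by (simp add: sum_distrib_left mult_ac)
    also have "\<dots> = (1 / sqrt (margV P x)) * (1 / sqrt (margL P y)) * (\<Sum>i<k. U x i * \<sigma> i * V y i)"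
      by (simp only: gram_opt[OF R_orth d_inv])
    finally show ?thesis using a by (simp add: mult_ac)
  qed
  have ivl_sub: "{k..<r} \<subseteq> {..<r}" by auto
  have sub: "{..<r} = {..<k} \<union> {k..<r}" using k_le by auto
  have diff: "Ptilde P x y - (\<Sum>i<k. (\<sigma> i * V y i) * U x i) = (\<Sum>i\<in>{k..<r}. (\<sigma> i * V y i) * U x i)" for x y
  proof -
    have "Ptilde P x y = (\<Sum>i<k. (\<sigma> i * V y i) * U x i) + (\<Sum>i\<in>{k..<r}. (\<sigma> i * V y i) * U x i)"
      using svd by (simp add: sub mult_ac, subst sum.union_disjoint) auto
    then show ?thesis by simp
  qed
  have "L_SCL k P gV gL = (\<Sum>y\<in>UNIV. \<Sum>x\<in>UNIV. (\<Sum>i\<in>{k..<r}. (\<sigma> i * V y i) * U x i)\<^sup>2)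
        - (\<Sum>y\<in>UNIV. \<Sum>x\<in>UNIV. (\<Sum>i\<in>{..<r}. (\<sigma> i * V y i) * U x i)\<^sup>2)"
    unfolding L_rewrite[OF posV posL] inner_vec_def vector_minus_component vec_lambda_beta inner_real_def bstar diff
    by (simp add: power2_eq_square svd mult_ac)
  also have "\<dots> = (\<Sum>i\<in>{k..<r}. (\<sigma> i)\<^sup>2) - (\<Sum>i\<in>{..<r}. (\<sigma> i)\<^sup>2)"
    using double_sq[OF U_on V_on ivl_sub, of \<sigma>] double_sq[OF U_on V_on subset_refl, of \<sigma>] by simp
  also have "\<dots> = - (\<Sum>i<k. (\<sigma> i)\<^sup>2)"
    by (simp only: sub, subst sum.union_disjoint) auto
  also have "\<dots> \<le> L_SCL k P fV fL"
    by (rule lower_bound[OF posV posL svd U_on V_on \<sigma>_mono \<sigma>_nonneg k_le])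
  finally show "L_SCL k P gV gL \<le> L_SCL k P fV fL" .
qed

end
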